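(* Let $L_{\mathbb{Z}_p}$ be a lattice with integral quadratic form $Q_L$ and consider $\Lambda_0=L_{\mathbb{Z}_p}\perp H^2=L_{\mathbb{Z}_p}\oplus\mathbb{Z}_p^4$ with $Q(x_L,x_0,x_1,x_2,x_3)=Q_L(x_L)+x_0x_1+x_2x_3$. Let $w\in\Lambda_0$ with $Q(w)\neq0$. Then the orthogonal complement $\langle w\rangle^\perp=\{x\in\Lambda_0:\langle w,x\rangle=0\}$ (with the restricted form) is isometric to $H\perp\Lambda$ for some lattice $\Lambda$.
   Context: $\langle v,w\rangle=Q(v+w)-Q(v)-Q(w)$ is the bilinear form of $Q$; $Q_L$ integral means $Q_L(L_{\mathbb{Z}_p})\subseteq\mathbb{Z}_p$. $H$ denotes the hyperbolic plane $\mathbb{Z}_p^2$ with $Q(x,y)=xy$ and $H^2=H\perp H$. *)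

theory Defs
  imports "HOL-Computational_Algebra.Primes"
begin

text \<open>p-adic integers, concretely: compatible sequences of residues x n in {0..<p^n}.\<close>
type_synonym padic = "nat \<Rightarrow> int"

definition Zp :: "int \<Rightarrow> padic set" where
  "Zp p = {x. \<forall>n. x n \<in> {0..<p ^ n} \<and> x (Suc n) mod p ^ n = x n}"

definition zp_zero :: padic where "zp_zero = (\<lambda>n. 0)"
definition zp_one :: "int \<Rightarrow> padic" where "zp_one p = (\<lambda>n. 1 mod p ^ n)"
definition zp_add :: "int \<Rightarrow> padic \<Rightarrow> padic \<Rightarrow> padic" where
  "zp_add p x y = (\<lambda>n. (x n + y n) mod p ^ n)"
definition zp_mul :: "int \<Rightarrow> padic \<Rightarrow> padic \<Rightarrow> padic" where
  "zp_mul p x y = (\<lambda>n. (x n * y n) mod p ^ n)"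
definition zp_neg :: "int \<Rightarrow> padic \<Rightarrow> padic" where
  "zp_neg p x = (\<lambda>n. (- x n) mod p ^ n)"
definition zp_sub :: "int \<Rightarrow> padic \<Rightarrow> padic \<Rightarrow> padic" where
  "zp_sub p x y = zp_add p x (zp_neg p y)"

definition Zp_vec :: "int \<Rightarrow> nat \<Rightarrow> (nat \<Rightarrow> padic) set" where
  "Zp_vec p m = {v. (\<forall>i<m. v i \<in> Zp p) \<and> (\<forall>i\<ge>m. v i = zp_zero)}"

definition vadd :: "int \<Rightarrow> (nat \<Rightarrow> padic) \<Rightarrow> (nat \<Rightarrow> padic) \<Rightarrow> (nat \<Rightarrow> padic)" where
  "vadd p x y = (\<lambda>i. zp_add p (x i) (y i))"
definition smult :: "int \<Rightarrow> padic \<Rightarrow> (nat \<Rightarrow> padic) \<Rightarrow> (nat \<Rightarrow> padic)" where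
  "smult p a x = (\<lambda>i. zp_mul p a (x i))"

definition bil :: "int \<Rightarrow> ((nat \<Rightarrow> padic) \<Rightarrow> padic) \<Rightarrow> (nat \<Rightarrow> padic) \<Rightarrow> (nat \<Rightarrow> padic) \<Rightarrow> padic" where
  "bil p Q x y = zp_sub p (zp_sub p (Q (vadd p x y)) (Q x)) (Q y)"

definition is_quadform :: "int \<Rightarrow> nat \<Rightarrow> ((nat \<Rightarrow> padic) \<Rightarrow> padic) \<Rightarrow> bool" where
  "is_quadform p m Q \<longleftrightarrow>
     (\<forall>x\<in>Zp_vec p m. Q x \<in> Zp p) \<and>
     (\<forall>a\<in>Zp p. \<forall>x\<in>Zp_vec p m. Q (smult p a x) = zp_mul p (zp_mul p a a) (Q x)) \<and>
     (\<forall>x\<in>Zp_vec p m. \<forall>y\<in>Zp_vec p m. \<forall>z\<in>Zp_vec p m.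
        bil p Q (vadd p x y) z = zp_add p (bil p Q x z) (bil p Q y z)) \<and>
     (\<forall>a\<in>Zp p. \<forall>x\<in>Zp_vec p m. \<forall>y\<in>Zp_vec p m.
        bil p Q (smult p a x) y = zp_mul p a (bil p Q x y))"

text \<open>Lambda_0 = L perp H^2 = Z_p^(n+4): coordinates 0..n-1 form x_L, then x_0,x_1,x_2,x_3.\<close>
definition vtrunc :: "nat \<Rightarrow> (nat \<Rightarrow> padic) \<Rightarrow> (nat \<Rightarrow> padic)" where
  "vtrunc n x = (\<lambda>i. if i < n then x i else zp_zero)"

definition Q0 :: "int \<Rightarrow> nat \<Rightarrow> ((nat \<Rightarrow> padic) \<Rightarrow> padic) \<Rightarrow> (nat \<Rightarrow> padic) \<Rightarrow> padic" where
  "Q0 p n QL x = zp_add p (zp_add p (QL (vtrunc n x)) (zp_mul p (x n) (x (n+1))))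
                          (zp_mul p (x (n+2)) (x (n+3)))"

definition orth_compl :: "int \<Rightarrow> nat \<Rightarrow> ((nat \<Rightarrow> padic) \<Rightarrow> padic) \<Rightarrow> (nat \<Rightarrow> padic) \<Rightarrow> (nat \<Rightarrow> padic) set" where
  "orth_compl p n QL w = {x \<in> Zp_vec p (n+4). bil p (Q0 p n QL) w x = zp_zero}"

text \<open>H perp Lambda = Z_p^(k+2), coordinates 0,1 the hyperbolic plane, then Lambda = Z_p^k.\<close>
definition hyp_sum :: "int \<Rightarrow> ((nat \<Rightarrow> padic) \<Rightarrow> padic) \<Rightarrow> (nat \<Rightarrow> padic) \<Rightarrow> padic" where
  "hyp_sum p QLam y = zp_add p (zp_mul p (y 0) (y 1)) (QLam (\<lambda>i. y (i + 2)))"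

definition isometry_onto ::
  "int \<Rightarrow> nat \<Rightarrow> ((nat \<Rightarrow> padic) \<Rightarrow> padic) \<Rightarrow> (nat \<Rightarrow> padic) set
   \<Rightarrow> ((nat \<Rightarrow> padic) \<Rightarrow> padic) \<Rightarrow> ((nat \<Rightarrow> padic) \<Rightarrow> (nat \<Rightarrow> padic)) \<Rightarrow> bool" where
  "isometry_onto p m Qs S Qt \<phi> \<longleftrightarrow>
     (\<forall>x\<in>Zp_vec p m. \<forall>y\<in>Zp_vec p m. \<phi> (vadd p x y) = vadd p (\<phi> x) (\<phi> y)) \<and>
     (\<forall>a\<in>Zp p. \<forall>x\<in>Zp_vec p m. \<phi> (smult p a x) = smult p a (\<phi> x)) \<and>
     inj_on \<phi> (Zp_vec p m) \<and> \<phi> ` Zp_vec p m = S \<and>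
     (\<forall>x\<in>Zp_vec p m. Qt (\<phi> x) = Qs x)"

end

theory Submission
  imports Defs "HOL-Library.Function_Algebras" "HOL-Number_Theory.Cong"
begin


definition red :: "int \<Rightarrow> padic \<Rightarrow> padic" where
  "red p x = (\<lambda>n. x n mod p ^ n)"

definition compat :: "int \<Rightarrow> padic \<Rightarrow> bool" where
  "compat p x \<longleftrightarrow> (\<forall>n. x (Suc n) mod p ^ n = x n mod p ^ n)"

lemma zp_add_red: "zp_add p x y = red p (x + y)"
  by (simp add: zp_add_def red_def fun_eq_iff)
lemma zp_mul_red: "zp_mul p x y = red p (x * y)"
  by (simp add: zp_mul_def red_def fun_eq_iff)
lemma zp_neg_red: "zp_neg p x = red p (- x)"
  by (simp add: zp_neg_def red_def fun_eq_iff)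
lemma zp_zero_eq: "zp_zero = 0"
  by (simp add: zp_zero_def fun_eq_iff)
lemma zp_one_red: "zp_one p = red p 1"
  by (simp add: zp_one_def red_def fun_eq_iff)

lemma red_add1[simp]: "red p (red p a + b) = red p (a + b)"
  by (simp add: red_def fun_eq_iff mod_add_left_eq)
lemma red_add2[simp]: "red p (a + red p b) = red p (a + b)"
  by (simp add: red_def fun_eq_iff mod_add_right_eq)
lemma red_mul1[simp]: "red p (red p a * b) = red p (a * b)"
  by (simp add: red_def fun_eq_iff mod_mult_left_eq)
lemma red_mul2[simp]: "red p (a * red p b) = red p (a * b)"
  by (simp add: red_def fun_eq_iff mod_mult_right_eq)
lemma red_neg[simp]: "red p (- red p a) = red p (- a)"
  by (simp add: red_def fun_eq_iff mod_minus_eq)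
lemma red_diff1[simp]: "red p (red p a - b) = red p (a - b)"
  by (simp add: red_def fun_eq_iff mod_diff_left_eq)
lemma red_diff2[simp]: "red p (a - red p b) = red p (a - b)"
  by (simp add: red_def fun_eq_iff mod_diff_right_eq)
lemma red_red[simp]: "red p (red p a) = red p a"
  by (simp add: red_def fun_eq_iff)

lemmas red_simps = red_add1 red_add2 red_mul1 red_mul2 red_neg red_diff1 red_diff2 red_red

lemma zp_sub_red: "zp_sub p x y = red p (x - y)"
  by (simp add: zp_sub_def zp_add_red zp_neg_red)

lemmas zp_red = zp_add_red zp_mul_red zp_neg_red zp_sub_red zp_zero_eq zp_one_red

lemma red_eqI: "a = b \<Longrightarrow> red p a = red p b" by simp

lemma zero_lam[simp]: "(\<lambda>a::nat. 0::int) = 0" by (simp add: fun_eq_iff)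

lemma red_apply: "red p x n = x n mod p ^ n"
  by (simp add: red_def)

locale padic =
  fixes p :: int
  assumes prime_p: "prime p"
begin

lemma p_gt1: "p > 1" using prime_p by (simp add: prime_int_iff)
lemma p_pos: "p > 0" using p_gt1 by simp
lemma pn_pos: "p ^ n > 0" using p_pos by simp
lemma p_nz[simp]: "p \<noteq> 0" using p_pos by simp

lemma Zp_compat: "x \<in> Zp p \<Longrightarrow> compat p x"
  by (simp add: Zp_def compat_def)

lemma Zp_red: "x \<in> Zp p \<Longrightarrow> red p x = x"
  unfolding Zp_def red_def fun_eq_iff using pn_pos by auto

lemma red_Zp: "compat p x \<Longrightarrow> red p x \<in> Zp p"
  unfolding Zp_def compat_def red_def
proof (intro CollectI allI conjI)
  fix n assume h: "\<forall>n. x (Suc n) mod p ^ n = x n mod p ^ n"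
  show "x n mod p ^ n \<in> {0..<p ^ n}" using pn_pos[of n] by simp
  have "p ^ n dvd p ^ Suc n" by simp
  then have "x (Suc n) mod p ^ Suc n mod p ^ n = x (Suc n) mod p ^ n"
    by (simp add: mod_mod_cancel)
  then show "x (Suc n) mod p ^ Suc n mod p ^ n = x n mod p ^ n" using h by simp
qed

lemma compat_add[simp]: "compat p a \<Longrightarrow> compat p b \<Longrightarrow> compat p (a + b)"
  unfolding compat_def by (metis mod_add_eq plus_fun_apply)
lemma compat_mul[simp]: "compat p a \<Longrightarrow> compat p b \<Longrightarrow> compat p (a * b)"
  unfolding compat_def by (metis mod_mult_eq times_fun_apply)
lemma compat_diff[simp]: "compat p a \<Longrightarrow> compat p b \<Longrightarrow> compat p (a - b)"
  unfolding compat_def by (metis mod_diff_eq minus_apply)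
lemma compat_neg[simp]: "compat p a \<Longrightarrow> compat p (- a)"
  unfolding compat_def by (metis mod_minus_eq uminus_apply)
lemma compat_const[simp]: "compat p (\<lambda>n. c)"
  unfolding compat_def by simp
lemma compat_0[simp]: "compat p 0" unfolding compat_def by simp
lemma compat_1[simp]: "compat p 1" unfolding compat_def by simp
lemma compat_numeral[simp]: "compat p (numeral k)" unfolding compat_def by simp
lemma compat_red[simp]: "compat p a \<Longrightarrow> compat p (red p a)"
  unfolding compat_def red_def
proof (intro allI)
  fix n assume h: "\<forall>n. a (Suc n) mod p ^ n = a n mod p ^ n"
  have "p ^ n dvd p ^ Suc n" by simp
  then have "a (Suc n) mod p ^ Suc n mod p ^ n = a (Suc n) mod p ^ n"
    by (simp add: mod_mod_cancel)
  then show "a (Suc n) mod p ^ Suc n mod p ^ n = a n mod p ^ n mod p ^ n" using h by simp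
qed
lemma compat_Zp[simp]: "x \<in> Zp p \<Longrightarrow> compat p x" by (rule Zp_compat)

lemma zp_add_Zp[simp]: "x \<in> Zp p \<Longrightarrow> y \<in> Zp p \<Longrightarrow> zp_add p x y \<in> Zp p"
  by (simp add: zp_add_red red_Zp)
lemma zp_mul_Zp[simp]: "x \<in> Zp p \<Longrightarrow> y \<in> Zp p \<Longrightarrow> zp_mul p x y \<in> Zp p"
  by (simp add: zp_mul_red red_Zp)
lemma zp_sub_Zp[simp]: "x \<in> Zp p \<Longrightarrow> y \<in> Zp p \<Longrightarrow> zp_sub p x y \<in> Zp p"
  by (simp add: zp_sub_red red_Zp)
lemma zp_neg_Zp[simp]: "x \<in> Zp p \<Longrightarrow> zp_neg p x \<in> Zp p"
  by (simp add: zp_neg_red red_Zp)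
lemma zp_zero_Zp[simp]: "zp_zero \<in> Zp p"
  by (simp add: Zp_def zp_zero_def pn_pos)
lemma zero_Zp[simp]: "(0::padic) \<in> Zp p"
  using zp_zero_Zp by (simp add: zp_zero_eq)
lemma zp_one_Zp[simp]: "zp_one p \<in> Zp p"
  by (simp add: zp_one_red red_Zp)

end


context padic
begin

definition pp :: "nat \<Rightarrow> padic" where "pp k = red p (\<lambda>n. p ^ k)"

lemma pp_Zp[simp]: "pp k \<in> Zp p" by (simp add: pp_def red_Zp)

lemma Zp_range: "x \<in> Zp p \<Longrightarrow> 0 \<le> x n \<and> x n < p ^ n"
  by (simp add: Zp_def)

lemma Zp_level: "x \<in> Zp p \<Longrightarrow> m \<le> k \<Longrightarrow> x k mod p ^ m = x m"
proof (induction k)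
  case 0
  then have "0 \<le> x 0" "x 0 < 1" by (auto simp: Zp_def dest: spec[of _ 0])
  then show ?case using 0 by simp
next
  case (Suc k)
  show ?case
  proof (cases "m = Suc k")
    case True
    have "0 \<le> x (Suc k)" "x (Suc k) < p ^ Suc k" using Zp_range[OF Suc.prems(1), of "Suc k"] by blast+
    then show ?thesis unfolding True by (rule mod_pos_pos_trivial)
  next
    case False
    then have mk: "m \<le> k" using Suc.prems by simp
    have "p ^ m dvd p ^ k" using mk by (simp add: le_imp_power_dvd)
    then have "x (Suc k) mod p ^ m = x (Suc k) mod p ^ k mod p ^ m"
      by (simp add: mod_mod_cancel)
    also have "\<dots> = x k mod p ^ m" using Suc.prems by (simp add: Zp_def)
    finally show ?thesis using Suc.IH[OF Suc.prems(1) mk] by simp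
  qed
qed


lemma Zp_0[simp]: "x \<in> Zp p \<Longrightarrow> x 0 = 0"
  using Zp_range[of x 0] by simp

lemma level_down: "x \<in> Zp p \<Longrightarrow> m \<le> k \<Longrightarrow> x k = 0 \<Longrightarrow> x m = 0"
  using Zp_level[of x m k] by simp

lemma div_pp:
  assumes x: "x \<in> Zp p" and xk: "x k = 0"
  shows "\<exists>z\<in>Zp p. x = zp_mul p (pp k) z"
proof -
  define z where "z = (\<lambda>n. x (n + k) div p ^ k)"
  have dv: "p ^ k dvd x (n + k)" for n
  proof -
    have "x (n + k) mod p ^ k = x k" using Zp_level[OF x, of k "n + k"] by simp
    then show ?thesis using xk by (simp add: mod_eq_0_iff_dvd)
  qed
  have zZ: "z \<in> Zp p"
    unfolding Zp_def
  proof (intro CollectI allI conjI)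
    fix n
    have r: "0 \<le> x (n + k)" "x (n + k) < p ^ (n + k)" using Zp_range[OF x] by blast+
    have pk: "p ^ k > 0" by (rule pn_pos)
    show "z n \<in> {0..<p ^ n}"
    proof -
      have "0 \<le> z n" unfolding z_def using r pk by (simp add: div_int_pos_iff)
      moreover have "z n < p ^ n"
      proof -
        have "x (n + k) < p ^ n * p ^ k" using r by (simp add: power_add)
        then show ?thesis unfolding z_def using pk by (smt (verit) minus_div_mult_eq_mod mult_right_less_imp_less pos_mod_sign)
      qed
      ultimately show ?thesis by simp
    qed
    obtain t where t: "x (Suc n + k) = p ^ k * t" using dv[of "Suc n"] by (auto simp: dvd_def)
    have "x (n + k) = x (Suc n + k) mod p ^ (n + k)" using Zp_level[OF x, of "n+k" "Suc n + k"] by simp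
    also have "\<dots> = p ^ k * (t mod p ^ n)"
    proof -
      have e: "p ^ (n + k) = p ^ k * p ^ n" by (simp add: power_add)
      show ?thesis by (simp only: t e mult_mod_right)
    qed
    finally have "x (n + k) = p ^ k * (t mod p ^ n)" .
    then have "z n = t mod p ^ n" unfolding z_def using pk p_pos by simp
    moreover have "z (Suc n) = t" unfolding z_def using t pk by simp
    ultimately show "z (Suc n) mod p ^ n = z n" by simp
  qed
  have "x = zp_mul p (pp k) z"
  proof (rule ext)
    fix n
    have pk: "p ^ k > 0" by (rule pn_pos)
    have "zp_mul p (pp k) z n = (p ^ k mod p ^ n * z n) mod p ^ n"
      by (simp add: zp_mul_def pp_def red_def)
    also have "\<dots> = (p ^ k * z n) mod p ^ n" by (simp add: mod_mult_left_eq)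
    also have "p ^ k * z n = x (n + k)" unfolding z_def using dv[of n] by simp
    also have "x (n + k) mod p ^ n = x n" using Zp_level[OF x, of n "n + k"] by simp
    finally show "x n = zp_mul p (pp k) z n" by simp
  qed
  with zZ show ?thesis by blast
qed

lemma inv_unique:
  fixes a r s m :: int
  assumes "(a * r) mod m = 1 mod m" "(a * s) mod m = 1 mod m"
  shows "r mod m = s mod m"
proof -
  have "[a * r = 1] (mod m)" "[a * s = 1] (mod m)" using assms by (auto simp: cong_def)
  have 1: "[r * (a * s) = r * 1] (mod m)" by (rule cong_mult[OF cong_refl \<open>[a * s = 1] (mod m)\<close>])
  have 2: "[s * (a * r) = s * 1] (mod m)" by (rule cong_mult[OF cong_refl \<open>[a * r = 1] (mod m)\<close>])
  have "r * (a * s) = s * (a * r)" by simp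
  then have "[r = s] (mod m)" using 1 2
    by (metis cong_sym cong_trans mult.right_neutral)
  then show ?thesis by (simp add: cong_def)
qed

lemma unit_inv:
  assumes u: "u \<in> Zp p" and u1: "u 1 \<noteq> 0"
  shows "\<exists>v\<in>Zp p. zp_mul p u v = zp_one p"
proof -
  have cop: "coprime (u n) (p ^ n)" for n
  proof (cases "n = 0")
    case True then show ?thesis by simp
  next
    case False
    have "u n mod p = u 1" using Zp_level[OF u, of 1 n] False by simp
    then have "\<not> p dvd u n" using u1 by (auto simp: dvd_eq_mod_eq_0)
    then have "coprime p (u n)" using prime_p by (simp add: prime_imp_coprime)
    then show ?thesis by (simp add: coprime_commute)
  qed
  define P where "P n r \<longleftrightarrow> r \<in> {0..<p ^ n} \<and> (u n * r) mod p ^ n = 1 mod p ^ n" for n r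
  have ex: "\<exists>r. P n r" for n
  proof -
    obtain b where "[u n * b = 1] (mod p ^ n)" using cong_solve_coprime_int[OF cop[of n]] by blast
    then have "(u n * (b mod p ^ n)) mod p ^ n = 1 mod p ^ n"
      by (simp add: cong_def mod_mult_right_eq)
    then show ?thesis unfolding P_def using pn_pos[of n] by (intro exI[of _ "b mod p ^ n"]) simp
  qed
  define v where "v n = (SOME r. P n r)" for n
  have vP: "P n (v n)" for n unfolding v_def using ex someI_ex by metis
  have vZ: "v \<in> Zp p"
    unfolding Zp_def
  proof (intro CollectI allI conjI)
    fix n
    show "v n \<in> {0..<p ^ n}" using vP[of n] by (simp add: P_def)
    have a: "(u n * v n) mod p ^ n = 1 mod p ^ n" using vP[of n] by (simp add: P_def)
    have "u (Suc n) mod p ^ n = u n" using u by (simp add: Zp_def)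
    have dv: "p ^ n dvd p ^ Suc n" by simp
    have "(u (Suc n) * v (Suc n)) mod p ^ Suc n = 1 mod p ^ Suc n" using vP[of "Suc n"] by (simp add: P_def)
    then have "(u (Suc n) * v (Suc n)) mod p ^ n = 1 mod p ^ n"
      by (metis dv mod_mod_cancel)
    then have "(u n * v (Suc n)) mod p ^ n = 1 mod p ^ n"
      using \<open>u (Suc n) mod p ^ n = u n\<close> by (metis mod_mult_left_eq)
    from inv_unique[OF this a] have "v (Suc n) mod p ^ n = v n mod p ^ n" .
    then show "v (Suc n) mod p ^ n = v n" using vP[of n] by (simp add: P_def)
  qed
  have "zp_mul p u v = zp_one p"
    using vP by (simp add: fun_eq_iff zp_mul_def zp_one_def P_def)
  with vZ show ?thesis by blast
qed

end


context padic
begin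

lemma zp_mul_apply: "zp_mul p x y m = (x m * y m) mod p ^ m"
  by (simp add: zp_mul_def)

lemma pp_apply: "pp j m = p ^ j mod p ^ m"
  by (simp add: pp_def red_def)

lemma decompose:
  assumes A: "A \<in> Zp p" and Aj: "A j = 0" and As: "A (Suc j) \<noteq> 0"
  shows "\<exists>u\<in>Zp p. u 1 \<noteq> 0 \<and> A = zp_mul p (pp j) u"
proof -
  obtain z where z: "z \<in> Zp p" and Az: "A = zp_mul p (pp j) z" using div_pp[OF A Aj] by blast
  have "z 1 \<noteq> 0"
  proof
    assume z1: "z 1 = 0"
    have "z (Suc j) mod p = z 1" using Zp_level[OF z, of 1 "Suc j"] by simp
    then have "p dvd z (Suc j)" using z1 by (simp add: dvd_eq_mod_eq_0)
    then obtain t where t: "z (Suc j) = p * t" by (auto simp: dvd_def)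
    have "A (Suc j) = (p ^ j mod p ^ Suc j * z (Suc j)) mod p ^ Suc j"
      by (simp add: Az zp_mul_apply pp_apply)
    also have "\<dots> = (p ^ j * z (Suc j)) mod p ^ Suc j" by (simp add: mod_mult_left_eq)
    also have "p ^ j * z (Suc j) = p ^ Suc j * t" using t by simp
    finally show False using As by simp
  qed
  with z Az show ?thesis by blast
qed


lemma divides:
  assumes A: "A = zp_mul p (pp j) u" and u: "u \<in> Zp p" and v: "v \<in> Zp p"
    and uv: "zp_mul p u v = zp_one p"
    and c: "c \<in> Zp p" and cj: "c j = 0"
  shows "\<exists>q\<in>Zp p. c = zp_mul p A q"
proof -
  obtain z where z: "z \<in> Zp p" and cz: "c = zp_mul p (pp j) z" using div_pp[OF c cj] by blast
  have uv': "red p (u * v) = red p 1" using uv by (simp add: zp_red)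
  have "zp_mul p A (zp_mul p v z) = red p ((pp j * z) * (u * v))"
    by (simp only: A zp_red red_simps) (rule red_eqI, simp add: algebra_simps)
  also have "\<dots> = red p ((pp j * z) * red p (u * v))" by simp
  also have "\<dots> = c" by (simp only: uv' red_mul2 cz zp_red) simp
  finally show ?thesis using v z by (intro bexI[of _ "zp_mul p v z"]) auto
qed

lemma pp_cancel:
  assumes q: "q \<in> Zp p" and q': "q' \<in> Zp p" and e: "zp_mul p (pp j) q = zp_mul p (pp j) q'"
  shows "q = q'"
proof (rule ext)
  fix m
  have lv: "zp_mul p (pp j) x (m + j) = p ^ j * x m" if x: "x \<in> Zp p" for x
  proof -
    have "zp_mul p (pp j) x (m + j) = (p ^ j mod p ^ (m + j) * x (m + j)) mod p ^ (m + j)"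
      by (simp add: zp_mul_apply pp_apply)
    also have "\<dots> = (p ^ j * x (m + j)) mod (p ^ m * p ^ j)"
      by (simp add: mod_mult_left_eq power_add)
    also have "\<dots> = (p ^ j * x (m + j)) mod (p ^ j * p ^ m)"
      by (simp only: mult.commute[of "p ^ m"])
    also have "\<dots> = p ^ j * (x (m + j) mod p ^ m)" by (rule mult_mod_right[symmetric])
    also have "x (m + j) mod p ^ m = x m" using Zp_level[OF x, of m "m + j"] by simp
    finally show ?thesis .
  qed
  have "p ^ j * q m = p ^ j * q' m" using lv[OF q] lv[OF q'] e by metis
  then show "q m = q' m" using pn_pos[of j] by simp
qed

lemma unit_cancel:
  assumes A: "A = zp_mul p (pp j) u" and u: "u \<in> Zp p" and v: "v \<in> Zp p"
    and uv: "zp_mul p u v = zp_one p"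
    and q: "q \<in> Zp p" and q': "q' \<in> Zp p" and e: "zp_mul p A q = zp_mul p A q'"
  shows "q = q'"
proof -
  have uv': "red p (u * v) = red p 1" using uv by (simp add: zp_red)
  have "zp_mul p (pp j) x = red p ((pp j * u * x) * v)" if "x \<in> Zp p" for x
  proof -
    have "red p ((pp j * u * x) * v) = red p ((pp j * x) * red p (u * v))" by (simp only: red_simps) (rule red_eqI, simp add: algebra_simps)
    also have "\<dots> = zp_mul p (pp j) x" by (simp only: uv' red_mul2) (simp add: zp_red)
    finally show ?thesis by simp
  qed
  moreover have "red p ((pp j * u * q) * v) = red p ((pp j * u * q') * v)"
  proof -
    have "red p (pp j * u * q) = red p (pp j * u * q')" using e by (simp only: A zp_red red_simps)
    then have "red p (red p (pp j * u * q) * v) = red p (red p (pp j * u * q') * v)" by simp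
    then show ?thesis by simp
  qed
  ultimately have "zp_mul p (pp j) q = zp_mul p (pp j) q'" using q q' by simp
  then show ?thesis using pp_cancel q q' by blast
qed

lemma two_cancel:
  assumes q: "q \<in> Zp p" and e: "red p (2 * q) = 0"
  shows "q = 0"
proof (rule ext)
  fix m
  have "(2 * q (Suc m)) mod p ^ Suc m = 0" using fun_cong[OF e, of "Suc m"] by (simp add: red_def)
  then have d: "p ^ Suc m dvd 2 * q (Suc m)" by (simp add: dvd_eq_mod_eq_0)
  have "p ^ m dvd q (Suc m)"
  proof (cases "p = 2")
    case True
    then show ?thesis using d by simp
  next
    case False
    have "\<not> p dvd 2"
    proof
      assume "p dvd 2"
      then have "p \<le> 2" by (simp add: zdvd_imp_le)
      then show False using p_gt1 False by simp
    qed
    then have "coprime p 2" by (rule prime_imp_coprime[OF prime_p])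
    then have "coprime (p ^ Suc m) 2" by simp
    then have "p ^ Suc m dvd q (Suc m)" using d coprime_dvd_mult_right_iff by blast
    then show ?thesis by (metis dvd_mult_right power_Suc)
  qed
  then have "q (Suc m) mod p ^ m = 0" by (simp add: dvd_eq_mod_eq_0)
  then show "q m = 0 m" using q by (simp add: Zp_def)
qed

end


lemma vadd_apply: "vadd p x y i = zp_add p (x i) (y i)" by (simp add: vadd_def)
lemma smult_apply: "smult p a x i = zp_mul p a (x i)" by (simp add: smult_def)

lemma zp_add_00[simp]: "zp_add p 0 0 = 0" by (simp add: zp_add_def fun_eq_iff)
lemma zp_mul_0[simp]: "zp_mul p a 0 = 0" by (simp add: zp_mul_def fun_eq_iff)

lemma vtrunc_vadd: "vtrunc n (vadd p x y) = vadd p (vtrunc n x) (vtrunc n y)"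
  by (simp add: vtrunc_def vadd_def fun_eq_iff zp_zero_eq)
lemma vtrunc_smult: "vtrunc n (smult p a x) = smult p a (vtrunc n x)"
  by (simp add: vtrunc_def smult_def fun_eq_iff zp_zero_eq)

lemma vadd_comm: "vadd p x y = vadd p y x"
  by (simp add: vadd_def zp_add_red add.commute)

lemma bil_sym: "bil p Q x y = bil p Q y x"
  unfolding bil_def by (simp only: vadd_comm[of p x y] zp_red red_simps) (rule red_eqI, simp add: algebra_simps)

lemma bil_Q0: "bil p (Q0 p n QL) x y =
   zp_add p (zp_add p (zp_add p (zp_add p (bil p QL (vtrunc n x) (vtrunc n y))
     (zp_mul p (x n) (y (n+1)))) (zp_mul p (x (n+1)) (y n)))
     (zp_mul p (x (n+2)) (y (n+3)))) (zp_mul p (x (n+3)) (y (n+2)))"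
  by (simp only: bil_def Q0_def vtrunc_vadd vadd_apply zp_red red_simps) (rule red_eqI, simp add: algebra_simps)

context padic
begin

lemma Zp_vecI: "(\<And>i. i < m \<Longrightarrow> v i \<in> Zp p) \<Longrightarrow> (\<And>i. i \<ge> m \<Longrightarrow> v i = 0) \<Longrightarrow> v \<in> Zp_vec p m"
  by (simp add: Zp_vec_def zp_zero_eq)
lemma Zp_vecD1: "v \<in> Zp_vec p m \<Longrightarrow> i < m \<Longrightarrow> v i \<in> Zp p"
  by (simp add: Zp_vec_def)
lemma Zp_vecD2: "v \<in> Zp_vec p m \<Longrightarrow> i \<ge> m \<Longrightarrow> v i = 0"
  by (simp add: Zp_vec_def zp_zero_eq)
lemma Zp_vec_Zp: "v \<in> Zp_vec p m \<Longrightarrow> v i \<in> Zp p"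
  by (cases "i < m") (auto simp: Zp_vecD1 Zp_vecD2)

lemma vadd_vec[simp]: "x \<in> Zp_vec p m \<Longrightarrow> y \<in> Zp_vec p m \<Longrightarrow> vadd p x y \<in> Zp_vec p m"
  by (rule Zp_vecI) (auto simp: vadd_apply Zp_vecD1 Zp_vecD2)
lemma smult_vec[simp]: "a \<in> Zp p \<Longrightarrow> x \<in> Zp_vec p m \<Longrightarrow> smult p a x \<in> Zp_vec p m"
  by (rule Zp_vecI) (auto simp: smult_apply Zp_vecD1 Zp_vecD2)
lemma vtrunc_vec[simp]: "x \<in> Zp_vec p m \<Longrightarrow> vtrunc n x \<in> Zp_vec p n"
  by (rule Zp_vecI) (auto simp: vtrunc_def Zp_vec_Zp zp_zero_eq)
lemma vtrunc_id: "x \<in> Zp_vec p n \<Longrightarrow> vtrunc n x = x"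
  by (auto simp: vtrunc_def fun_eq_iff Zp_vecD2 zp_zero_eq)

context
  fixes m :: nat and Q :: "(nat \<Rightarrow> padic) \<Rightarrow> padic"
  assumes qf: "is_quadform p m Q"
begin

lemma qf_Zp[simp]: "x \<in> Zp_vec p m \<Longrightarrow> Q x \<in> Zp p"
  using qf by (simp add: is_quadform_def)
lemma qf_smult: "a \<in> Zp p \<Longrightarrow> x \<in> Zp_vec p m \<Longrightarrow> Q (smult p a x) = zp_mul p (zp_mul p a a) (Q x)"
  using qf by (simp add: is_quadform_def)
lemma bil_add_left: "x \<in> Zp_vec p m \<Longrightarrow> y \<in> Zp_vec p m \<Longrightarrow> z \<in> Zp_vec p m \<Longrightarrow>
   bil p Q (vadd p x y) z = zp_add p (bil p Q x z) (bil p Q y z)"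
  using qf by (simp add: is_quadform_def)
lemma bil_smult_left: "a \<in> Zp p \<Longrightarrow> x \<in> Zp_vec p m \<Longrightarrow> y \<in> Zp_vec p m \<Longrightarrow>
   bil p Q (smult p a x) y = zp_mul p a (bil p Q x y)"
  using qf by (simp add: is_quadform_def)
lemma bil_add_right: "x \<in> Zp_vec p m \<Longrightarrow> y \<in> Zp_vec p m \<Longrightarrow> z \<in> Zp_vec p m \<Longrightarrow>
   bil p Q z (vadd p x y) = zp_add p (bil p Q z x) (bil p Q z y)"
  using bil_add_left bil_sym by metis
lemma bil_smult_right: "a \<in> Zp p \<Longrightarrow> x \<in> Zp_vec p m \<Longrightarrow> y \<in> Zp_vec p m \<Longrightarrow>
   bil p Q y (smult p a x) = zp_mul p a (bil p Q y x)"
  using bil_smult_left bil_sym by metis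
lemma bil_Zp[simp]: "x \<in> Zp_vec p m \<Longrightarrow> y \<in> Zp_vec p m \<Longrightarrow> bil p Q x y \<in> Zp p"
  unfolding bil_def by simp
lemma Q_add: "x \<in> Zp_vec p m \<Longrightarrow> y \<in> Zp_vec p m \<Longrightarrow>
   Q (vadd p x y) = zp_add p (zp_add p (Q x) (Q y)) (bil p Q x y)"
proof -
  assume x: "x \<in> Zp_vec p m" and y: "y \<in> Zp_vec p m"
  have "zp_add p (zp_add p (Q x) (Q y)) (bil p Q x y) = red p (Q (vadd p x y))"
    by (simp only: bil_def zp_red red_simps) (rule red_eqI, simp add: algebra_simps)
  also have "\<dots> = Q (vadd p x y)" using x y by (simp add: Zp_red)
  finally show ?thesis by simp
qed

lemma vadd_self: "vadd p y y = smult p (zp_add p (zp_one p) (zp_one p)) y"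
  by (simp add: vadd_def smult_def fun_eq_iff zp_red)

lemma bil_self: "y \<in> Zp_vec p m \<Longrightarrow> bil p Q y y = zp_mul p (zp_add p (zp_one p) (zp_one p)) (Q y)"
proof -
  assume y: "y \<in> Zp_vec p m"
  have e: "Q (smult p (zp_add p (zp_one p) (zp_one p)) y) = zp_mul p (zp_mul p (zp_add p (zp_one p) (zp_one p)) (zp_add p (zp_one p) (zp_one p))) (Q y)"
    by (rule qf_smult) (simp_all add: y)
  show ?thesis
    unfolding bil_def vadd_self e
    by (simp only: zp_red red_simps) (rule red_eqI, simp add: algebra_simps)
qed

end

end


locale qfl = padic +
  fixes n :: nat and QL :: "(nat \<Rightarrow> padic) \<Rightarrow> padic"
  assumes qfL: "is_quadform p n QL"
begin

abbreviation V where "V \<equiv> Zp_vec p (n + 4)"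
abbreviation B0 where "B0 \<equiv> bil p (Q0 p n QL)"
abbreviation BL where "BL \<equiv> bil p QL"

lemma Q0_Zp[simp]: "x \<in> V \<Longrightarrow> Q0 p n QL x \<in> Zp p"
  unfolding Q0_def using qf_Zp[OF qfL] by (simp add: Zp_vec_Zp)

lemma B0_Zp[simp]: "x \<in> V \<Longrightarrow> y \<in> V \<Longrightarrow> B0 x y \<in> Zp p"
  unfolding bil_def by simp

lemma transport:
  fixes h g :: "(nat \<Rightarrow> padic) \<Rightarrow> (nat \<Rightarrow> padic)"
  assumes hadd: "\<And>x y. x \<in> V \<Longrightarrow> y \<in> V \<Longrightarrow> h (vadd p x y) = vadd p (h x) (h y)"
    and hsm: "\<And>a x. a \<in> Zp p \<Longrightarrow> x \<in> V \<Longrightarrow> h (smult p a x) = smult p a (h x)"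
    and hV: "\<And>x. x \<in> V \<Longrightarrow> h x \<in> V" and gV: "\<And>x. x \<in> V \<Longrightarrow> g x \<in> V"
    and hg: "\<And>x. x \<in> V \<Longrightarrow> h (g x) = x" and gh: "\<And>x. x \<in> V \<Longrightarrow> g (h x) = x"
    and hQ: "\<And>x. x \<in> V \<Longrightarrow> Q0 p n QL (h x) = Q0 p n QL x"
    and w: "w \<in> V"
    and iso: "isometry_onto p m Qs (orth_compl p n QL (g w)) (Q0 p n QL) \<phi>"
  shows "isometry_onto p m Qs (orth_compl p n QL w) (Q0 p n QL) (h \<circ> \<phi>)"
proof -
  have hB: "B0 (h x) (h y) = B0 x y" if "x \<in> V" "y \<in> V" for x y
    unfolding bil_def using that by (simp add: hadd[symmetric] hQ)
  have gw: "g w \<in> V" using gV w by simp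
  have img: "h ` orth_compl p n QL (g w) = orth_compl p n QL w"
  proof
    show "h ` orth_compl p n QL (g w) \<subseteq> orth_compl p n QL w"
    proof
      fix z assume "z \<in> h ` orth_compl p n QL (g w)"
      then obtain x where x: "x \<in> V" "B0 (g w) x = zp_zero" and z: "z = h x"
        by (auto simp: orth_compl_def)
      have "B0 w z = B0 (h (g w)) (h x)" using hg w z by simp
      also have "\<dots> = zp_zero" using hB[OF gw x(1)] x(2) by simp
      finally show "z \<in> orth_compl p n QL w" using hV x(1) z by (simp add: orth_compl_def)
    qed
  next
    show "orth_compl p n QL w \<subseteq> h ` orth_compl p n QL (g w)"
    proof
      fix z assume "z \<in> orth_compl p n QL w"
      then have z: "z \<in> V" "B0 w z = zp_zero" by (auto simp: orth_compl_def)
      have "B0 (g w) (g z) = B0 (h (g w)) (h (g z))" using hB gV w z(1) by simp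
      also have "\<dots> = zp_zero" using hg w z by simp
      finally have "g z \<in> orth_compl p n QL (g w)" using gV z(1) by (simp add: orth_compl_def)
      then show "z \<in> h ` orth_compl p n QL (g w)" using hg z(1) by (metis image_eqI)
    qed
  qed
  have phiV: "\<phi> x \<in> V" if "x \<in> Zp_vec p m" for x
    using iso that unfolding isometry_onto_def orth_compl_def by blast
  have injh: "inj_on h V" by (metis gh inj_on_inverseI)
  have phiimg: "\<phi> ` Zp_vec p m \<subseteq> V" using phiV by blast
  show ?thesis
    unfolding isometry_onto_def
  proof (intro conjI ballI)
    fix x y assume "x \<in> Zp_vec p m" "y \<in> Zp_vec p m"
    then show "(h \<circ> \<phi>) (vadd p x y) = vadd p ((h \<circ> \<phi>) x) ((h \<circ> \<phi>) y)"
      using iso phiV hadd unfolding isometry_onto_def by simp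
  next
    fix a x assume "a \<in> Zp p" "x \<in> Zp_vec p m"
    then show "(h \<circ> \<phi>) (smult p a x) = smult p a ((h \<circ> \<phi>) x)"
      using iso phiV hsm unfolding isometry_onto_def by simp
  next
    show "inj_on (h \<circ> \<phi>) (Zp_vec p m)"
      using iso injh phiimg unfolding isometry_onto_def by (metis comp_inj_on inj_on_subset)
  next
    show "(h \<circ> \<phi>) ` Zp_vec p m = orth_compl p n QL w"
    proof -
      have "\<phi> ` Zp_vec p m = orth_compl p n QL (g w)" using iso unfolding isometry_onto_def by blast
      then show ?thesis using img by (metis image_comp)
    qed
  next
    fix x assume "x \<in> Zp_vec p m"
    then show "Q0 p n QL ((h \<circ> \<phi>) x) = Qs x"
      using iso phiV hQ unfolding isometry_onto_def by simp
  qed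
qed

end


context qfl
begin

definition hperm :: "(nat \<Rightarrow> nat) \<Rightarrow> (nat \<Rightarrow> padic) \<Rightarrow> (nat \<Rightarrow> padic)" where
  "hperm \<sigma> x = (\<lambda>i. if n \<le> i \<and> i < n + 4 then x (n + \<sigma> (i - n)) else x i)"

lemma hperm_add: "hperm \<sigma> (vadd p x y) = vadd p (hperm \<sigma> x) (hperm \<sigma> y)"
  by (simp add: hperm_def vadd_def fun_eq_iff)
lemma hperm_smult: "hperm \<sigma> (smult p a x) = smult p a (hperm \<sigma> x)"
  by (simp add: hperm_def smult_def fun_eq_iff)
lemma hperm_V: "(\<And>k. k < 4 \<Longrightarrow> \<sigma> k < 4) \<Longrightarrow> x \<in> V \<Longrightarrow> hperm \<sigma> x \<in> V"
  by (rule Zp_vecI) (auto simp: hperm_def Zp_vec_Zp Zp_vecD2)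
lemma hperm_inv: "(\<And>k. k < 4 \<Longrightarrow> \<sigma> k < 4) \<Longrightarrow> (\<And>k. k < 4 \<Longrightarrow> \<sigma> (\<sigma> k) = k) \<Longrightarrow>
   hperm \<sigma> (hperm \<sigma> x) = x"
  by (auto simp: hperm_def fun_eq_iff)
lemma hperm_trunc: "vtrunc n (hperm \<sigma> x) = vtrunc n x"
  by (simp add: hperm_def vtrunc_def fun_eq_iff)

definition s1 :: "nat \<Rightarrow> nat" where "s1 k = (if k = 0 then 1 else if k = 1 then 0 else k)"
definition s2 :: "nat \<Rightarrow> nat" where "s2 k = (if k = 0 then 2 else if k = 1 then 3 else if k = 2 then 0 else if k = 3 then 1 else k)"
definition s3 :: "nat \<Rightarrow> nat" where "s3 k = (if k < 4 then 3 - k else k)"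

lemma s1_ok: "k < 4 \<Longrightarrow> s1 k < 4" "k < 4 \<Longrightarrow> s1 (s1 k) = k" by (auto simp: s1_def)
lemma s2_ok: "k < 4 \<Longrightarrow> s2 k < 4" "k < 4 \<Longrightarrow> s2 (s2 k) = k" by (auto simp: s2_def)
lemma s3_ok: "k < 4 \<Longrightarrow> s3 k < 4" "k < 4 \<Longrightarrow> s3 (s3 k) = k" by (auto simp: s3_def)

lemma hperm_apply:
  "hperm \<sigma> x n = x (n + \<sigma> 0)" "hperm \<sigma> x (n+1) = x (n + \<sigma> 1)"
  "hperm \<sigma> x (n+2) = x (n + \<sigma> 2)" "hperm \<sigma> x (n+3) = x (n + \<sigma> 3)"
  by (simp_all add: hperm_def)

lemma s1_Q: "Q0 p n QL (hperm s1 x) = Q0 p n QL x"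
  unfolding Q0_def hperm_trunc hperm_apply
  by (simp add: s1_def zp_red) (rule red_eqI, simp add: algebra_simps)
lemma s2_Q: "Q0 p n QL (hperm s2 x) = Q0 p n QL x"
  unfolding Q0_def hperm_trunc hperm_apply
  by (simp add: s2_def zp_red) (rule red_eqI, simp add: algebra_simps)
lemma s3_Q: "Q0 p n QL (hperm s3 x) = Q0 p n QL x"
  unfolding Q0_def hperm_trunc hperm_apply
  by (simp add: s3_def zp_red) (rule red_eqI, simp add: algebra_simps)

lemma hperm_transport:
  assumes ok1: "\<And>k. k < 4 \<Longrightarrow> \<sigma> k < 4" and ok2: "\<And>k. k < 4 \<Longrightarrow> \<sigma> (\<sigma> k) = k"
    and Q: "\<And>x. Q0 p n QL (hperm \<sigma> x) = Q0 p n QL x"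
    and w: "w \<in> V"
    and iso: "isometry_onto p m Qs (orth_compl p n QL (hperm \<sigma> w)) (Q0 p n QL) \<phi>"
  shows "\<exists>\<phi>. isometry_onto p m Qs (orth_compl p n QL w) (Q0 p n QL) \<phi>"
  using transport[where h = "hperm \<sigma>" and g = "hperm \<sigma>", OF hperm_add hperm_smult
      hperm_V[OF ok1] hperm_V[OF ok1] hperm_inv[OF ok1 ok2] hperm_inv[OF ok1 ok2] Q w iso] by blast

end


context qfl
begin

definition eich :: "(nat \<Rightarrow> padic) \<Rightarrow> (nat \<Rightarrow> padic) \<Rightarrow> (nat \<Rightarrow> padic)" where
  "eich y x = (\<lambda>i. if i < n then zp_add p (x i) (zp_mul p (x n) (y i))
     else if i = n + 1 then zp_sub p (zp_sub p (x (n+1)) (BL (vtrunc n x) y)) (zp_mul p (QL y) (x n))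
     else x i)"

definition negv :: "(nat \<Rightarrow> padic) \<Rightarrow> (nat \<Rightarrow> padic)" where
  "negv y = smult p (zp_neg p (zp_one p)) y"

lemma negv_vec: "y \<in> Zp_vec p n \<Longrightarrow> negv y \<in> Zp_vec p n"
  by (simp add: negv_def)

lemma negv_negv: "y \<in> Zp_vec p n \<Longrightarrow> negv (negv y) = y"
proof (rule ext)
  fix i assume y: "y \<in> Zp_vec p n"
  have "red p (negv (negv y) i) = red p (y i)"
    by (simp only: negv_def smult_apply zp_red red_simps) (rule red_eqI, simp add: algebra_simps)
  moreover have "negv (negv y) i \<in> Zp p" using y negv_vec Zp_vec_Zp by blast
  ultimately show "negv (negv y) i = y i" using y by (simp add: Zp_red Zp_vec_Zp)
qed

lemma eich_apply:
  "eich y x n = x n" "eich y x (n+2) = x (n+2)" "eich y x (n+3) = x (n+3)"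
  "eich y x (n+1) = zp_sub p (zp_sub p (x (n+1)) (BL (vtrunc n x) y)) (zp_mul p (QL y) (x n))"
  by (simp_all add: eich_def)

lemma eich_V: "y \<in> Zp_vec p n \<Longrightarrow> x \<in> V \<Longrightarrow> eich y x \<in> V"
  by (rule Zp_vecI) (auto simp: eich_def Zp_vec_Zp Zp_vecD2 qf_Zp[OF qfL] bil_Zp[OF qfL])

lemma eich_trunc: "y \<in> Zp_vec p n \<Longrightarrow> vtrunc n (eich y x) = vadd p (vtrunc n x) (smult p (x n) y)"
  by (auto simp: eich_def vtrunc_def vadd_def smult_def fun_eq_iff Zp_vecD2 zp_zero_eq)

lemma eich_Q:
  assumes y: "y \<in> Zp_vec p n" and x: "x \<in> V"
  shows "Q0 p n QL (eich y x) = Q0 p n QL x"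
proof -
  have xn: "x n \<in> Zp p" using x Zp_vec_Zp by blast
  have tx: "vtrunc n x \<in> Zp_vec p n" using x by simp
  have sy: "smult p (x n) y \<in> Zp_vec p n" using xn y by simp
  have e1: "QL (vadd p (vtrunc n x) (smult p (x n) y)) =
     zp_add p (zp_add p (QL (vtrunc n x)) (QL (smult p (x n) y))) (BL (vtrunc n x) (smult p (x n) y))"
    by (rule Q_add[OF qfL tx sy])
  have e2: "QL (smult p (x n) y) = zp_mul p (zp_mul p (x n) (x n)) (QL y)"
    by (rule qf_smult[OF qfL xn y])
  have e3: "BL (vtrunc n x) (smult p (x n) y) = zp_mul p (x n) (BL (vtrunc n x) y)"
    by (rule bil_smult_right[OF qfL xn y tx])
  show ?thesis
    unfolding Q0_def eich_trunc[OF y] eich_apply e1 e2 e3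
    by (simp only: zp_red red_simps) (rule red_eqI, simp add: algebra_simps)
qed

lemma eich_add:
  assumes y: "y \<in> Zp_vec p n" and a: "a \<in> V" and b: "b \<in> V"
  shows "eich y (vadd p a b) = vadd p (eich y a) (eich y b)"
proof (rule ext)
  fix i
  have ta: "vtrunc n a \<in> Zp_vec p n" and tb: "vtrunc n b \<in> Zp_vec p n" using a b by simp_all
  have e: "BL (vtrunc n (vadd p a b)) y = zp_add p (BL (vtrunc n a) y) (BL (vtrunc n b) y)"
    unfolding vtrunc_vadd by (rule bil_add_left[OF qfL ta tb y])
  show "eich y (vadd p a b) i = vadd p (eich y a) (eich y b) i"
  proof (cases "i < n")
    case True then show ?thesis
      by (simp add: eich_def vadd_apply) (simp only: zp_red red_simps, rule red_eqI, simp add: algebra_simps)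
  next
    case False
    show ?thesis
    proof (cases "i = n + 1")
      case True then show ?thesis unfolding eich_def using False
        by (simp add: vadd_apply e del: vtrunc_vadd) (simp only: zp_red red_simps, rule red_eqI, simp add: algebra_simps)
    next
      case False2: False
      then show ?thesis using False by (simp add: eich_def vadd_apply)
    qed
  qed
qed

lemma eich_smult:
  assumes y: "y \<in> Zp_vec p n" and c: "c \<in> Zp p" and a: "a \<in> V"
  shows "eich y (smult p c a) = smult p c (eich y a)"
proof (rule ext)
  fix i
  have ta: "vtrunc n a \<in> Zp_vec p n" using a by simp_all
  have e: "BL (vtrunc n (smult p c a)) y = zp_mul p c (BL (vtrunc n a) y)"
    unfolding vtrunc_smult by (rule bil_smult_left[OF qfL c ta y])
  show "eich y (smult p c a) i = smult p c (eich y a) i"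
  proof (cases "i < n")
    case True then show ?thesis
      by (simp add: eich_def smult_apply) (simp only: zp_red red_simps, rule red_eqI, simp add: algebra_simps)
  next
    case False
    show ?thesis
    proof (cases "i = n + 1")
      case True then show ?thesis unfolding eich_def using False
        by (simp add: smult_apply e del: vtrunc_smult) (simp only: zp_red red_simps, rule red_eqI, simp add: algebra_simps)
    next
      case False2: False
      then show ?thesis using False by (simp add: eich_def smult_apply)
    qed
  qed
qed

lemma eich_inv:
  assumes y: "y \<in> Zp_vec p n" and x: "x \<in> V"
  shows "eich (negv y) (eich y x) = x"
proof (rule ext)
  fix i
  have xn: "x n \<in> Zp p" using x Zp_vec_Zp by blast
  have tx: "vtrunc n x \<in> Zp_vec p n" using x by simp
  have sy: "smult p (x n) y \<in> Zp_vec p n" using xn y by simp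
  have m1: "zp_neg p (zp_one p) \<in> Zp p" by simp
  have ny: "negv y \<in> Zp_vec p n" using y by (rule negv_vec)
  have e1: "BL (vtrunc n (eich y x)) (negv y) =
     zp_add p (BL (vtrunc n x) (negv y)) (BL (smult p (x n) y) (negv y))"
    unfolding eich_trunc[OF y] by (rule bil_add_left[OF qfL tx sy ny])
  have e2: "BL (vtrunc n x) (negv y) = zp_mul p (zp_neg p (zp_one p)) (BL (vtrunc n x) y)"
    unfolding negv_def by (rule bil_smult_right[OF qfL m1 y tx])
  have e3: "BL (smult p (x n) y) (negv y) = zp_mul p (x n) (zp_mul p (zp_neg p (zp_one p)) (BL y y))"
    unfolding negv_def bil_smult_left[OF qfL xn y ny[unfolded negv_def]]
      bil_smult_right[OF qfL m1 y y] by simp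
  have e4: "BL y y = zp_mul p (zp_add p (zp_one p) (zp_one p)) (QL y)"
    by (rule bil_self[OF qfL y])
  have e5: "QL (negv y) = zp_mul p (zp_mul p (zp_neg p (zp_one p)) (zp_neg p (zp_one p))) (QL y)"
    unfolding negv_def by (rule qf_smult[OF qfL m1 y])
  have xi: "x i \<in> Zp p" using x Zp_vec_Zp by blast
  show "eich (negv y) (eich y x) i = x i"
  proof (cases "i < n")
    case True
    have "red p (eich (negv y) (eich y x) i) = red p (x i)"
      using True unfolding eich_def negv_def
      by (simp add: smult_apply) (simp only: zp_red red_simps, rule red_eqI, simp add: algebra_simps)
    moreover have "eich (negv y) (eich y x) i \<in> Zp p" using eich_V[OF ny eich_V[OF y x]] Zp_vec_Zp by blast
    ultimately show ?thesis using xi by (simp add: Zp_red)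
  next
    case False
    show ?thesis
    proof (cases "i = n + 1")
      case True
      have "red p (eich (negv y) (eich y x) i) = red p (x i)"
        unfolding True eich_apply e1 e2 e3 e4 e5
        by (simp only: zp_red red_simps) (rule red_eqI, simp add: algebra_simps)
      moreover have "eich (negv y) (eich y x) i \<in> Zp p" using eich_V[OF ny eich_V[OF y x]] Zp_vec_Zp by blast
      ultimately show ?thesis using xi by (simp add: Zp_red)
    next
      case False2: False
      then show ?thesis using False by (simp add: eich_def)
    qed
  qed
qed

lemma eich_transport:
  assumes y: "y \<in> Zp_vec p n" and w: "w \<in> V"
    and iso: "isometry_onto p m Qs (orth_compl p n QL (eich y w)) (Q0 p n QL) \<phi>"
  shows "\<exists>\<phi>. isometry_onto p m Qs (orth_compl p n QL w) (Q0 p n QL) \<phi>"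
proof -
  have ny: "negv y \<in> Zp_vec p n" using y by (rule negv_vec)
  have inv2: "eich y (eich (negv y) x) = x" if "x \<in> V" for x
    using eich_inv[OF ny that] negv_negv[OF y] by simp
  show ?thesis
    using transport[where h = "eich (negv y)" and g = "eich y",
        OF eich_add[OF ny] eich_smult[OF ny] eich_V[OF ny] eich_V[OF y] eich_inv[OF y] inv2
        eich_Q[OF ny] w iso] by blast
qed

end


lemma red_zero[simp]: "red p 0 = 0" by (simp add: red_def fun_eq_iff)

locale core = qfl +
  fixes w :: "nat \<Rightarrow> padic" and j :: nat
  assumes wV: "w \<in> V" and Aj: "w (n+1) j = 0" and As: "w (n+1) (Suc j) \<noteq> 0"
    and lev: "\<And>x. x \<in> Zp_vec p n \<Longrightarrow> BL (vtrunc n w) x j = 0"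
    and l0: "w n j = 0" and l2: "w (n+2) j = 0" and l3: "w (n+3) j = 0"
begin

abbreviation A where "A \<equiv> w (n+1)"

lemma wZ: "w i \<in> Zp p" using wV Zp_vec_Zp by blast
lemma twV: "vtrunc n w \<in> Zp_vec p n" using wV by simp

definition uu where "uu = (SOME u. u \<in> Zp p \<and> u 1 \<noteq> 0 \<and> A = zp_mul p (pp j) u)"
lemma uu: "uu \<in> Zp p" "uu 1 \<noteq> 0" "A = zp_mul p (pp j) uu"
proof -
  have "\<exists>u. u \<in> Zp p \<and> u 1 \<noteq> 0 \<and> A = zp_mul p (pp j) u" using decompose[OF wZ Aj As] by blast
  then have "uu \<in> Zp p \<and> uu 1 \<noteq> 0 \<and> A = zp_mul p (pp j) uu" unfolding uu_def by (rule someI_ex)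
  then show "uu \<in> Zp p" "uu 1 \<noteq> 0" "A = zp_mul p (pp j) uu" by auto
qed

definition vv where "vv = (SOME v. v \<in> Zp p \<and> zp_mul p uu v = zp_one p)"
lemma vv: "vv \<in> Zp p" "zp_mul p uu vv = zp_one p"
proof -
  have "\<exists>v. v \<in> Zp p \<and> zp_mul p uu v = zp_one p" using unit_inv[OF uu(1) uu(2)] by blast
  then have "vv \<in> Zp p \<and> zp_mul p uu vv = zp_one p" unfolding vv_def by (rule someI_ex)
  then show "vv \<in> Zp p" "zp_mul p uu vv = zp_one p" by auto
qed

definition dv where "dv c = (SOME q. q \<in> Zp p \<and> c = zp_mul p A q)"

lemma dv: assumes "c \<in> Zp p" "c j = 0" shows "dv c \<in> Zp p" "c = zp_mul p A (dv c)"
proof -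
  have "\<exists>q. q \<in> Zp p \<and> c = zp_mul p A q" using divides[OF uu(3) uu(1) vv assms] by blast
  then have "dv c \<in> Zp p \<and> c = zp_mul p A (dv c)" unfolding dv_def by (rule someI_ex)
  then show "dv c \<in> Zp p" "c = zp_mul p A (dv c)" by auto
qed

lemma cancelA: "q \<in> Zp p \<Longrightarrow> q' \<in> Zp p \<Longrightarrow> zp_mul p A q = zp_mul p A q' \<Longrightarrow> q = q'"
  using unit_cancel[OF uu(3) uu(1) vv] by blast

definition q1 where "q1 = dv (w n)"
definition q2 where "q2 = dv (w (n+3))"
definition q3 where "q3 = dv (w (n+2))"
definition mu where "mu x = dv (BL (vtrunc n w) x)"

lemma q_Zp[simp]: "q1 \<in> Zp p" "q2 \<in> Zp p" "q3 \<in> Zp p"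
  unfolding q1_def q2_def q3_def using dv(1) wZ l0 l2 l3 by auto
lemma q_eq: "w n = zp_mul p A q1" "w (n+3) = zp_mul p A q2" "w (n+2) = zp_mul p A q3"
  unfolding q1_def q2_def q3_def using dv(2) wZ l0 l2 l3 by auto

lemma mu_Zp[simp]: "x \<in> Zp_vec p n \<Longrightarrow> mu x \<in> Zp p"
  unfolding mu_def using dv(1) lev bil_Zp[OF qfL twV] by blast
lemma mu_eq: "x \<in> Zp_vec p n \<Longrightarrow> BL (vtrunc n w) x = zp_mul p A (mu x)"
  unfolding mu_def using dv(2) lev bil_Zp[OF qfL twV] by blast

lemma AZ[simp]: "A \<in> Zp p" by (rule wZ)

lemma mu_add: assumes a: "a \<in> Zp_vec p n" and b: "b \<in> Zp_vec p n"
  shows "mu (vadd p a b) = zp_add p (mu a) (mu b)"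
proof (rule cancelA)
  show "mu (vadd p a b) \<in> Zp p" "zp_add p (mu a) (mu b) \<in> Zp p" using a b by simp_all
  have "zp_mul p A (mu (vadd p a b)) = BL (vtrunc n w) (vadd p a b)" using a b by (simp add: mu_eq)
  also have "\<dots> = zp_add p (BL (vtrunc n w) a) (BL (vtrunc n w) b)" by (rule bil_add_right[OF qfL a b twV])
  also have "\<dots> = zp_mul p A (zp_add p (mu a) (mu b))" unfolding mu_eq[OF a] mu_eq[OF b]
    by (simp only: zp_red red_simps) (rule red_eqI, simp add: algebra_simps)
  finally show "zp_mul p A (mu (vadd p a b)) = zp_mul p A (zp_add p (mu a) (mu b))" .
qed

lemma mu_smult: assumes c: "c \<in> Zp p" and a: "a \<in> Zp_vec p n"
  shows "mu (smult p c a) = zp_mul p c (mu a)"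
proof (rule cancelA)
  show "mu (smult p c a) \<in> Zp p" "zp_mul p c (mu a) \<in> Zp p" using a c by simp_all
  have "zp_mul p A (mu (smult p c a)) = BL (vtrunc n w) (smult p c a)" using a c by (simp add: mu_eq)
  also have "\<dots> = zp_mul p c (BL (vtrunc n w) a)" by (rule bil_smult_right[OF qfL c a twV])
  also have "\<dots> = zp_mul p A (zp_mul p c (mu a))" unfolding mu_eq[OF a]
    by (simp only: zp_red red_simps) (rule red_eqI, simp add: algebra_simps)
  finally show "zp_mul p A (mu (smult p c a)) = zp_mul p A (zp_mul p c (mu a))" .
qed

end


context core
begin

definition c0 where "c0 = zp_add p q1 (zp_mul p q2 q3)"
lemma c0_Zp[simp]: "c0 \<in> Zp p" by (simp add: c0_def)

definition QLam :: "(nat \<Rightarrow> padic) \<Rightarrow> padic" where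
  "QLam z = zp_sub p (zp_sub p (QL (vtrunc n z)) (zp_mul p (z n) (mu (vtrunc n z))))
      (zp_mul p c0 (zp_mul p (z n) (z n)))"

lemma QLam_Zp: "z \<in> Zp_vec p (n+1) \<Longrightarrow> QLam z \<in> Zp p"
  unfolding QLam_def using qf_Zp[OF qfL] by (simp add: Zp_vec_Zp)

lemma bilLam:
  assumes x: "x \<in> Zp_vec p (n+1)" and z: "z \<in> Zp_vec p (n+1)"
  shows "bil p QLam x z = zp_sub p (zp_sub p (zp_sub p (BL (vtrunc n x) (vtrunc n z))
     (zp_mul p (x n) (mu (vtrunc n z)))) (zp_mul p (z n) (mu (vtrunc n x))))
     (zp_mul p (zp_add p c0 c0) (zp_mul p (x n) (z n)))"
proof -
  have tx: "vtrunc n x \<in> Zp_vec p n" and tz: "vtrunc n z \<in> Zp_vec p n" using x z by simp_all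
  show ?thesis
    unfolding bil_def QLam_def vtrunc_vadd mu_add[OF tx tz] vadd_apply
    by (simp only: zp_red red_simps) (rule red_eqI, simp add: algebra_simps)
qed

lemma QLam_qf: "is_quadform p (n+1) QLam"
  unfolding is_quadform_def
proof (intro conjI ballI)
  fix x assume "x \<in> Zp_vec p (n+1)" then show "QLam x \<in> Zp p" by (rule QLam_Zp)
next
  fix a x assume a: "a \<in> Zp p" and x: "x \<in> Zp_vec p (n+1)"
  have tx: "vtrunc n x \<in> Zp_vec p n" using x by simp
  show "QLam (smult p a x) = zp_mul p (zp_mul p a a) (QLam x)"
    unfolding QLam_def vtrunc_smult qf_smult[OF qfL a tx] mu_smult[OF a tx] smult_apply
    by (simp only: zp_red red_simps) (rule red_eqI, simp add: algebra_simps)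
next
  fix x y z assume x: "x \<in> Zp_vec p (n+1)" and y: "y \<in> Zp_vec p (n+1)" and z: "z \<in> Zp_vec p (n+1)"
  have tx: "vtrunc n x \<in> Zp_vec p n" and ty: "vtrunc n y \<in> Zp_vec p n" and tz: "vtrunc n z \<in> Zp_vec p n"
    using x y z by simp_all
  have xy: "vadd p x y \<in> Zp_vec p (n+1)" using x y by simp
  show "bil p QLam (vadd p x y) z = zp_add p (bil p QLam x z) (bil p QLam y z)"
    unfolding bilLam[OF xy z] bilLam[OF x z] bilLam[OF y z] vtrunc_vadd
      bil_add_left[OF qfL tx ty tz] mu_add[OF tx ty] vadd_apply
    by (simp only: zp_red red_simps) (rule red_eqI, simp add: algebra_simps)
next
  fix a x y assume a: "a \<in> Zp p" and x: "x \<in> Zp_vec p (n+1)" and y: "y \<in> Zp_vec p (n+1)"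
  have tx: "vtrunc n x \<in> Zp_vec p n" and ty: "vtrunc n y \<in> Zp_vec p n" using x y by simp_all
  have ax: "smult p a x \<in> Zp_vec p (n+1)" using a x by simp
  show "bil p QLam (smult p a x) y = zp_mul p a (bil p QLam x y)"
    unfolding bilLam[OF ax y] bilLam[OF x y] vtrunc_smult
      bil_smult_left[OF qfL a tx ty] mu_smult[OF a tx] smult_apply
    by (simp only: zp_red red_simps) (rule red_eqI, simp add: algebra_simps)
qed

end


context core
begin

abbreviation W where "W \<equiv> Zp_vec p (n+3)"

definition yL where "yL y = vtrunc n (\<lambda>i. y (i+2))"
definition X2 where "X2 y = zp_add p (y 0) (zp_mul p q3 (y (n+2)))"
definition X3 where "X3 y = zp_add p (y 1) (zp_mul p q2 (y (n+2)))"
definition XN where "XN y = zp_neg p (zp_add p (zp_add p (zp_add p (mu (yL y)) (zp_mul p q1 (y (n+2))))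
   (zp_mul p q2 (X2 y))) (zp_mul p q3 (X3 y)))"
definition phi where "phi y = (\<lambda>i. if i < n then y (i+2) else if i = n then XN y
   else if i = n+1 then y (n+2) else if i = n+2 then X2 y else if i = n+3 then X3 y else 0)"
definition psi where "psi x = (\<lambda>i. if i = 0 then zp_sub p (x (n+2)) (zp_mul p q3 (x (n+1)))
   else if i = 1 then zp_sub p (x (n+3)) (zp_mul p q2 (x (n+1)))
   else if i < n+2 then x (i-2) else if i = n+2 then x (n+1) else 0)"

lemma yL_vec: "y \<in> W \<Longrightarrow> yL y \<in> Zp_vec p n"
  unfolding yL_def by (rule Zp_vecI) (auto simp: vtrunc_def Zp_vec_Zp zp_zero_eq)
lemma yL_add: "yL (vadd p a b) = vadd p (yL a) (yL b)"
  unfolding yL_def by (simp add: vtrunc_def vadd_def fun_eq_iff zp_zero_eq)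
lemma yL_smult: "yL (smult p c a) = smult p c (yL a)"
  unfolding yL_def by (simp add: vtrunc_def smult_def fun_eq_iff zp_zero_eq)

lemma X_Zp[simp]: "y \<in> W \<Longrightarrow> X2 y \<in> Zp p" "y \<in> W \<Longrightarrow> X3 y \<in> Zp p" "y \<in> W \<Longrightarrow> XN y \<in> Zp p"
  unfolding X2_def X3_def XN_def using yL_vec by (auto simp: Zp_vec_Zp)

lemma phi_V: "y \<in> W \<Longrightarrow> phi y \<in> V"
  unfolding phi_def by (rule Zp_vecI) (auto simp: Zp_vec_Zp)

lemma phi_trunc: "vtrunc n (phi y) = yL y"
  by (simp add: phi_def yL_def vtrunc_def fun_eq_iff)

lemma phi_apply: "phi y n = XN y" "phi y (n+1) = y (n+2)" "phi y (n+2) = X2 y" "phi y (n+3) = X3 y"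
  by (simp_all add: phi_def)

lemma phi_add: assumes a: "a \<in> W" and b: "b \<in> W"
  shows "phi (vadd p a b) = vadd p (phi a) (phi b)"
proof (rule ext)
  fix i
  have mu: "mu (yL (vadd p a b)) = zp_add p (mu (yL a)) (mu (yL b))"
    unfolding yL_add by (rule mu_add[OF yL_vec[OF a] yL_vec[OF b]])
  show "phi (vadd p a b) i = vadd p (phi a) (phi b) i"
    unfolding phi_def XN_def X2_def X3_def mu vadd_apply
    by (simp only: zp_red red_simps, (auto)[1]; (rule red_eqI, simp add: algebra_simps))
qed

lemma phi_smult: assumes c: "c \<in> Zp p" and a: "a \<in> W"
  shows "phi (smult p c a) = smult p c (phi a)"
proof (rule ext)
  fix i
  have mu: "mu (yL (smult p c a)) = zp_mul p c (mu (yL a))"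
    unfolding yL_smult by (rule mu_smult[OF c yL_vec[OF a]])
  consider "i < n" | "i = n" | "i = n+1" | "i = n+2" | "i = n+3" | "i \<ge> n + 4" by linarith
  then show "phi (smult p c a) i = smult p c (phi a) i"
  proof cases
    case 1 then show ?thesis by (simp add: phi_def smult_apply)
  next
    case 2 then show ?thesis unfolding 2 smult_apply[of p c "phi a"] phi_apply
      unfolding XN_def X2_def X3_def mu
      unfolding smult_apply
      by (simp only: zp_red red_simps) (rule red_eqI, simp add: algebra_simps)
  next
    case 3 then show ?thesis by (simp add: phi_def smult_apply)
  next
    case 4 then show ?thesis unfolding 4 phi_apply smult_apply X2_def
      by (simp only: zp_red red_simps) (rule red_eqI, simp add: algebra_simps)
  next
    case 5 then show ?thesis unfolding 5 phi_apply smult_apply X3_def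
      by (simp only: zp_red red_simps) (rule red_eqI, simp add: algebra_simps)
  next
    case 6 then show ?thesis by (simp add: phi_def smult_apply)
  qed
qed

lemma psi_W: "x \<in> V \<Longrightarrow> psi x \<in> W"
  unfolding psi_def by (rule Zp_vecI) (auto simp: Zp_vec_Zp)

lemma red_inj: "a \<in> Zp p \<Longrightarrow> b \<in> Zp p \<Longrightarrow> red p a = red p b \<Longrightarrow> a = b"
  by (simp add: Zp_red)

lemma psi_apply: "psi x 0 = zp_sub p (x (n+2)) (zp_mul p q3 (x (n+1)))"
  "psi x 1 = zp_sub p (x (n+3)) (zp_mul p q2 (x (n+1)))" "psi x (n+2) = x (n+1)"
  by (simp_all add: psi_def)

lemma psi_phi: assumes y: "y \<in> W" shows "psi (phi y) = y"
proof (rule ext)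
  fix i
  have yi: "y i \<in> Zp p" using y Zp_vec_Zp by blast
  consider "i = 0" | "i = 1" | "2 \<le> i" "i < n + 2" | "i = n + 2" | "i > n + 2" by linarith
  then show "psi (phi y) i = y i"
  proof cases
    case 1
    have "zp_sub p (X2 y) (zp_mul p q3 (y (n+2))) = y 0"
    proof (rule red_inj)
      show "zp_sub p (X2 y) (zp_mul p q3 (y (n+2))) \<in> Zp p" "y 0 \<in> Zp p" using y by (simp_all add: Zp_vec_Zp)
      show "red p (zp_sub p (X2 y) (zp_mul p q3 (y (n+2)))) = red p (y 0)"
        by (simp only: X2_def zp_red red_simps) simp
    qed
    then show ?thesis using 1 by (simp add: psi_def phi_def)
  next
    case 2
    have "zp_sub p (X3 y) (zp_mul p q2 (y (n+2))) = y 1"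
    proof (rule red_inj)
      show "zp_sub p (X3 y) (zp_mul p q2 (y (n+2))) \<in> Zp p" "y 1 \<in> Zp p" using y by (simp_all add: Zp_vec_Zp)
      show "red p (zp_sub p (X3 y) (zp_mul p q2 (y (n+2)))) = red p (y 1)"
        by (simp only: X3_def zp_red red_simps) simp
    qed
    then show ?thesis using 2 by (simp add: psi_def phi_def)
  next
    case 3
    then have "Suc (Suc (i-2)) = i" "i - 2 < n" by simp_all
    then show ?thesis using 3 by (simp add: psi_def phi_def)
  next
    case 4 then show ?thesis by (simp add: psi_def phi_def)
  next
    case 5 then show ?thesis using y by (simp add: psi_def Zp_vecD2)
  qed
qed

lemma B0w: assumes x: "x \<in> V"
  shows "B0 w x = zp_mul p A (zp_add p (zp_add p (zp_add p (zp_add p (mu (vtrunc n x)) (zp_mul p q1 (x (n+1))))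
     (x n)) (zp_mul p q3 (x (n+3)))) (zp_mul p q2 (x (n+2))))"
proof -
  have tx: "vtrunc n x \<in> Zp_vec p n" using x by simp
  show ?thesis
    unfolding bil_Q0 mu_eq[OF tx] q_eq(1)
    by (simp only: zp_red red_simps q_eq(2,3)[unfolded zp_red]) (rule red_eqI, simp add: algebra_simps)
qed

lemma phi_orth: assumes y: "y \<in> W" shows "B0 w (phi y) = zp_zero"
proof -
  have "B0 w (phi y) = red p 0"
    unfolding B0w[OF phi_V[OF y]] phi_trunc phi_apply XN_def
    by (simp only: zp_red red_simps) (rule red_eqI, simp add: algebra_simps)
  then show ?thesis by (simp add: zp_zero_eq)
qed

lemma phi_psi: assumes x: "x \<in> V" and o: "B0 w x = zp_zero" shows "phi (psi x) = x"
proof (rule ext)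
  fix i
  have xi: "x i \<in> Zp p" for i using x Zp_vec_Zp by blast
  have tx: "vtrunc n x \<in> Zp_vec p n" using x by simp
  have yLp: "yL (psi x) = vtrunc n x" by (simp add: yL_def psi_def vtrunc_def fun_eq_iff)
  have X2p: "X2 (psi x) = x (n+2)"
  proof (rule red_inj)
    show "X2 (psi x) \<in> Zp p" "x (n+2) \<in> Zp p" using xi psi_W[OF x] by simp_all
    show "red p (X2 (psi x)) = red p (x (n+2))"
      by (simp only: X2_def psi_apply zp_red red_simps) simp
  qed
  have X3p: "X3 (psi x) = x (n+3)"
  proof (rule red_inj)
    show "X3 (psi x) \<in> Zp p" "x (n+3) \<in> Zp p" using xi psi_W[OF x] by simp_all
    show "red p (X3 (psi x)) = red p (x (n+3))"
      by (simp only: X3_def psi_apply zp_red red_simps) simp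
  qed
  define S where "S = zp_add p (zp_add p (zp_add p (zp_add p (mu (vtrunc n x)) (zp_mul p q1 (x (n+1))))
     (x n)) (zp_mul p q3 (x (n+3)))) (zp_mul p q2 (x (n+2)))"
  have SZ: "S \<in> Zp p" unfolding S_def using tx xi by simp
  have "zp_mul p A S = zp_mul p A 0" using o B0w[OF x] by (simp add: S_def zp_red zp_zero_eq)
  then have S0: "S = 0" using cancelA[OF SZ] by simp
  have XNp: "XN (psi x) = x n"
  proof -
    have "red p (XN (psi x)) = red p (x n - S)"
      unfolding XN_def yLp X2p X3p S_def psi_apply
      by (simp only: zp_red red_simps) (rule red_eqI, simp add: algebra_simps)
    also have "\<dots> = x n" using S0 xi by (simp add: Zp_red)
    finally show ?thesis using X_Zp(3)[OF psi_W[OF x]] by (simp add: Zp_red)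
  qed
  consider "i < n" | "i = n" | "i = n+1" | "i = n+2" | "i = n+3" | "i \<ge> n + 4" by linarith
  then show "phi (psi x) i = x i"
  proof cases
    case 1 then show ?thesis by (simp add: phi_def psi_def)
  next
    case 2 then show ?thesis using XNp by (simp add: phi_def)
  next
    case 3 then show ?thesis by (simp add: phi_def psi_def)
  next
    case 4 then show ?thesis using X2p by (simp add: phi_def)
  next
    case 5 then show ?thesis using X3p by (simp add: phi_def)
  next
    case 6 then show ?thesis using x by (simp add: phi_def Zp_vecD2)
  qed
qed

lemma phi_Q: assumes y: "y \<in> W" shows "Q0 p n QL (phi y) = hyp_sum p QLam y"
  unfolding Q0_def hyp_sum_def QLam_def phi_trunc phi_apply XN_def X2_def X3_def c0_def
  by (simp only: yL_def[symmetric] zp_red red_simps) (rule red_eqI, simp add: algebra_simps)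

end


context core
begin

theorem core_result:
  "\<exists>k QLam \<phi>. is_quadform p k QLam \<and>
     isometry_onto p (k + 2) (hyp_sum p QLam) (orth_compl p n QL w) (Q0 p n QL) \<phi>"
proof (intro exI conjI)
  show "is_quadform p (n+1) QLam" by (rule QLam_qf)
  have e: "n + 1 + 2 = n + 3" by simp
  show "isometry_onto p (n + 1 + 2) (hyp_sum p QLam) (orth_compl p n QL w) (Q0 p n QL) phi"
    unfolding e isometry_onto_def
  proof (intro conjI ballI)
    fix x y assume "x \<in> W" "y \<in> W" then show "phi (vadd p x y) = vadd p (phi x) (phi y)" by (rule phi_add)
  next
    fix a x assume "a \<in> Zp p" "x \<in> W" then show "phi (smult p a x) = smult p a (phi x)" by (rule phi_smult)
  next
    show "inj_on phi W" using psi_phi by (metis inj_on_inverseI)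
  next
    show "phi ` W = orth_compl p n QL w"
    proof
      show "phi ` W \<subseteq> orth_compl p n QL w" using phi_V phi_orth by (auto simp: orth_compl_def)
      show "orth_compl p n QL w \<subseteq> phi ` W"
      proof
        fix x assume "x \<in> orth_compl p n QL w"
        then have x: "x \<in> V" "B0 w x = zp_zero" by (auto simp: orth_compl_def)
        then have "x = phi (psi x)" using phi_psi by simp
        then show "x \<in> phi ` W" using psi_W[OF x(1)] by blast
      qed
    qed
  next
    fix x assume "x \<in> W" then show "Q0 p n QL (phi x) = hyp_sum p QLam x" by (rule phi_Q)
  qed
qed

end


context qfl
begin

lemma hperm_apply2: "hperm \<sigma> x (Suc n) = x (n + \<sigma> 1)" "hperm \<sigma> x (Suc (Suc n)) = x (n + \<sigma> 2)"
  by (simp_all add: hperm_def)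
lemma eich_apply2: "eich y x (Suc (Suc n)) = x (n+2)"
  "eich y x (Suc n) = zp_sub p (zp_sub p (x (n+1)) (BL (vtrunc n x) y)) (zp_mul p (QL y) (x n))"
  by (simp_all add: eich_def)

abbreviation Goal where "Goal w \<equiv> \<exists>k QLam \<phi>. is_quadform p k QLam \<and>
     isometry_onto p (k + 2) (hyp_sum p QLam) (orth_compl p n QL w) (Q0 p n QL) \<phi>"

lemma zero_from_levels: "c \<in> Zp p \<Longrightarrow> (\<And>m. c (Suc m) = 0) \<Longrightarrow> c = 0"
  by (rule ext, case_tac x) auto

lemma B0_self: assumes w: "w \<in> V" shows "B0 w w = zp_mul p (zp_add p (zp_one p) (zp_one p)) (Q0 p n QL w)"
proof -
  have tw: "vtrunc n w \<in> Zp_vec p n" using w by simp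
  show ?thesis unfolding bil_Q0 bil_self[OF qfL tw] Q0_def
    by (simp only: zp_red red_simps) (rule red_eqI, simp add: algebra_simps)
qed

definition P where "P w m \<longleftrightarrow> (\<exists>x\<in>Zp_vec p n. BL (vtrunc n w) x (Suc m) \<noteq> 0) \<or> w n (Suc m) \<noteq> 0 \<or>
   w (n+1) (Suc m) \<noteq> 0 \<or> w (n+2) (Suc m) \<noteq> 0 \<or> w (n+3) (Suc m) \<noteq> 0"

lemma P_ex: assumes w: "w \<in> V" and Q: "Q0 p n QL w \<noteq> zp_zero" shows "\<exists>m. P w m"
proof (rule ccontr)
  assume "\<not> (\<exists>m. P w m)"
  then have nP: "\<And>m. \<not> P w m" by blast
  have wZ: "w i \<in> Zp p" for i using w Zp_vec_Zp by blast
  have tw: "vtrunc n w \<in> Zp_vec p n" using w by simp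
  have z: "w n = 0" "w (n+1) = 0" "w (n+2) = 0" "w (n+3) = 0"
    using nP zero_from_levels[OF wZ] unfolding P_def by blast+
  have zB: "BL (vtrunc n w) (vtrunc n w) = 0"
    using nP zero_from_levels[OF bil_Zp[OF qfL tw tw]] tw unfolding P_def by blast
  have "B0 w w = 0" unfolding bil_Q0 z zB by (simp add: zp_red)
  then have "red p (2 * Q0 p n QL w) = 0" unfolding B0_self[OF w] by (simp add: zp_red)
  then have "Q0 p n QL w = 0" using two_cancel Q0_Zp[OF w] by blast
  then show False using Q by (simp add: zp_zero_eq)
qed

lemma main:
  assumes w: "w \<in> V" and Q: "Q0 p n QL w \<noteq> zp_zero"
  shows "Goal w"
proof -
  define j where "j = (LEAST m. P w m)"
  have Pj: "P w j" unfolding j_def using P_ex[OF w Q] by (metis LeastI)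
  have wZ: "w i \<in> Zp p" for i using w Zp_vec_Zp by blast
  have tw: "vtrunc n w \<in> Zp_vec p n" using w by simp
  have levs: "(\<forall>x\<in>Zp_vec p n. BL (vtrunc n w) x j = 0) \<and> w n j = 0 \<and> w (n+1) j = 0 \<and> w (n+2) j = 0 \<and> w (n+3) j = 0"
  proof (cases j)
    case 0 then show ?thesis using wZ bil_Zp[OF qfL tw] by simp
  next
    case (Suc m)
    then have "\<not> P w m" unfolding j_def by (metis lessI not_less_Least)
    then show ?thesis unfolding P_def Suc by auto
  qed
  then have lv: "\<And>x. x \<in> Zp_vec p n \<Longrightarrow> BL (vtrunc n w) x j = 0" "w n j = 0" "w (n+1) j = 0" "w (n+2) j = 0" "w (n+3) j = 0"
    by auto
  consider (a) "w (n+1) (Suc j) \<noteq> 0" | (b) "w n (Suc j) \<noteq> 0" | (c) "w (n+3) (Suc j) \<noteq> 0"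
    | (d) "w (n+2) (Suc j) \<noteq> 0"
    | (e) y where "y \<in> Zp_vec p n" "BL (vtrunc n w) y (Suc j) \<noteq> 0" "w n (Suc j) = 0" "w (n+1) (Suc j) = 0"
    using Pj unfolding P_def by blast
  then show ?thesis
  proof cases
    case a
    interpret core p n QL w j by unfold_locales (use w a lv in auto)
    show ?thesis by (rule core_result)
  next
    case b
    let ?w = "hperm s1 w"
    have w': "?w \<in> V" using hperm_V[OF s1_ok(1) w] .
    interpret c: core p n QL ?w j
      by unfold_locales (use w' b lv in \<open>auto simp: hperm_apply hperm_apply2 hperm_trunc s1_def\<close>)
    from c.core_result obtain k QLam \<phi> where "is_quadform p k QLam"
      "isometry_onto p (k + 2) (hyp_sum p QLam) (orth_compl p n QL ?w) (Q0 p n QL) \<phi>" by blast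
    then show ?thesis using hperm_transport[OF s1_ok s1_Q w] by blast
  next
    case c
    let ?w = "hperm s2 w"
    have w': "?w \<in> V" using hperm_V[OF s2_ok(1) w] .
    interpret c: core p n QL ?w j
      by unfold_locales (use w' c lv in \<open>auto simp: hperm_apply hperm_apply2 hperm_trunc s2_def\<close>)
    from c.core_result obtain k QLam \<phi> where "is_quadform p k QLam"
      "isometry_onto p (k + 2) (hyp_sum p QLam) (orth_compl p n QL ?w) (Q0 p n QL) \<phi>" by blast
    then show ?thesis using hperm_transport[OF s2_ok s2_Q w] by blast
  next
    case d
    let ?w = "hperm s3 w"
    have w': "?w \<in> V" using hperm_V[OF s3_ok(1) w] .
    interpret c: core p n QL ?w j
      by unfold_locales (use w' d lv in \<open>auto simp: hperm_apply hperm_apply2 hperm_trunc s3_def\<close>)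
    from c.core_result obtain k QLam \<phi> where "is_quadform p k QLam"
      "isometry_onto p (k + 2) (hyp_sum p QLam) (orth_compl p n QL ?w) (Q0 p n QL) \<phi>" by blast
    then show ?thesis using hperm_transport[OF s3_ok s3_Q w] by blast
  next
    case (e y)
    let ?w = "eich y w"
    have y: "y \<in> Zp_vec p n" by fact
    have w': "?w \<in> V" using eich_V[OF y w] .
    have yZ: "QL y \<in> Zp p" "BL (vtrunc n w) y \<in> Zp p" using y tw qf_Zp[OF qfL] bil_Zp[OF qfL] by auto
    have A': "?w (n+1) = red p (w (n+1) - BL (vtrunc n w) y - QL y * w n)"
      unfolding eich_apply by (simp only: zp_red red_simps)
    have Aj': "?w (n+1) j = 0" unfolding A' red_apply using lv lv(1)[OF y] by simp
    have As': "?w (n+1) (Suc j) \<noteq> 0"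
    proof
      assume "?w (n+1) (Suc j) = 0"
      then have "(- BL (vtrunc n w) y (Suc j)) mod p ^ Suc j = 0"
        unfolding A' red_apply using e(3,4) by simp
      then have "p ^ Suc j dvd BL (vtrunc n w) y (Suc j)" by (metis dvd_eq_mod_eq_0 dvd_minus_iff)
      moreover have "0 \<le> BL (vtrunc n w) y (Suc j)" "BL (vtrunc n w) y (Suc j) < p ^ Suc j"
        using Zp_range[OF yZ(2), of "Suc j"] by blast+
      ultimately show False using e(2) zdvd_not_zless[of "BL (vtrunc n w) y (Suc j)" "p ^ Suc j"] by linarith
    qed
    have lev': "BL (vtrunc n ?w) x j = 0" if x: "x \<in> Zp_vec p n" for x
    proof -
      have wn: "w n \<in> Zp p" by (rule wZ)
      have sy: "smult p (w n) y \<in> Zp_vec p n" using wn y by simp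
      have "BL (vtrunc n ?w) x = zp_add p (BL (vtrunc n w) x) (zp_mul p (w n) (BL y x))"
        unfolding eich_trunc[OF y] bil_add_left[OF qfL tw sy x] bil_smult_left[OF qfL wn y x] ..
      also have "\<dots> = red p (BL (vtrunc n w) x + w n * BL y x)" by (simp only: zp_red red_simps)
      finally show ?thesis unfolding red_apply using lv(1)[OF x] lv(2) by simp
    qed
    interpret c: core p n QL ?w j
      by unfold_locales (use w' Aj' As' lev' lv in \<open>auto simp: eich_apply eich_apply2\<close>)
    from c.core_result obtain k QLam \<phi> where "is_quadform p k QLam"
      "isometry_onto p (k + 2) (hyp_sum p QLam) (orth_compl p n QL ?w) (Q0 p n QL) \<phi>" by blast
    then show ?thesis using eich_transport[OF y w] by blast
  qed
qed

end


theorem mainTheorem12: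
  fixes p :: int and n :: nat and QL :: "(nat \<Rightarrow> padic) \<Rightarrow> padic" and w :: "nat \<Rightarrow> padic"
  assumes "prime p"
    and "is_quadform p n QL"
    and "w \<in> Zp_vec p (n + 4)"
    and "Q0 p n QL w \<noteq> zp_zero"
  shows "\<exists>k QLam \<phi>. is_quadform p k QLam \<and>
           isometry_onto p (k + 2) (hyp_sum p QLam) (orth_compl p n QL w) (Q0 p n QL) \<phi>"
proof -
  interpret qfl p n QL by unfold_locales (rule assms)+
  show ?thesis using main[OF assms(3) assms(4)] .
qed

end
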